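(* Let $T:\mathbb{Z}_{\ge 0}\to\mathbb{R}$ satisfy $T(mn) = T(m)T(n) + T(m-1)T(n-1)$ for all integers $m,n\ge 1$, and suppose $T(0)=0$ and $T(1)=1$. Then $T(2)\in\{0,1,3\}$. *)

theory Defs
  imports Complex_Main
begin

end

theory Submission
  imports Defs
begin

theorem lemma11:
  fixes T :: "nat \<Rightarrow> real"
  assumes rec: "\<And>m n. m \<ge> 1 \<Longrightarrow> n \<ge> 1 \<Longrightarrow> T (m * n) = T m * T n + T (m - 1) * T (n - 1)"
    and "T 0 = 0" and "T 1 = 1"
  shows "T 2 \<in> {0, 1, 3}"
proof -
  have T1: "T (Suc 0) = 1" using assms(3) by simp
  define a where "a = T 2"
  define b where "b = T 3"
  have h4: "T 4 = a*a+1" using rec[of 2 2] assms(3) by (simp add: T1 a_def)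
  have h6: "T 6 = a*b + a" using rec[of 2 3] assms(3) by (simp add: T1 a_def b_def)
  have h12a: "T 12 = a * T 6 + T 5" using rec[of 2 6] by (simp add: T1 a_def)
  have h12b: "T 12 = b * T 4 + a * b" using rec[of 3 4] by (simp add: T1 a_def b_def)
  have h8: "T 8 = a * T 4 + b" using rec[of 2 4] by (simp add: T1 a_def b_def)
  have h16a: "T 16 = a * T 8 + T 7" using rec[of 2 8] by (simp add: T1 a_def)
  have h16b: "T 16 = T 4 * T 4 + b * b" using rec[of 4 4] by (simp add: T1 b_def)
  have h9: "T 9 = b*b + a*a" using rec[of 3 3] by (simp add: T1 a_def b_def)
  have h18a: "T 18 = a * T 9 + T 8" using rec[of 2 9] by (simp add: T1 a_def)
  have h18b: "T 18 = b * T 6 + a * T 5" using rec[of 3 6] by (simp add: T1 a_def b_def)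
  have h10: "T 10 = a * T 5 + T 4" using rec[of 2 5] by (simp add: T1 a_def)
  have h14: "T 14 = a * T 7 + T 6" using rec[of 2 7] by (simp add: T1 a_def)
  have h15: "T 15 = b * T 5 + a * T 4" using rec[of 3 5] by (simp add: T1 a_def b_def)
  have h30a: "T 30 = a * T 15 + T 14" using rec[of 2 15] by (simp add: T1 a_def)
  have h30b: "T 30 = b * T 10 + a * T 9" using rec[of 3 10] by (simp add: T1 a_def b_def)
  have c: "T 5 = b + a*b - a*a" using h12a h12b h4 h6 by (simp add: algebra_simps)
  have d: "T 7 = T 4 * T 4 + b * b - a * T 8" using h16a h16b by simp
  have E1: "b * (a*a + 2*a - 1) = 3*a^3 + a"
    using h18a h18b h9 h8 h4 h6 c by (simp add: algebra_simps power3_eq_cube)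
  have E3: "b * (2*a*a - a + 1) = a^4 + a*a + 2*a"
    using h30a h30b h15 h14 h10 h9 h8 h4 h6 c d
    by (simp add: algebra_simps power4_eq_xxxx)
  have "(3*a^3 + a) * (2*a*a - a + 1) = (a^4 + a*a + 2*a) * (a*a + 2*a - 1)"
    by (metis E1 E3 mult.assoc mult.commute)
  hence "a * (a - 1) * (a - 3) * (a^3 - 1) = 0"
    by (simp add: algebra_simps power3_eq_cube power4_eq_xxxx)
  moreover have "a^3 - 1 = (a - 1) * (a*a + a + 1)" by (simp add: algebra_simps power3_eq_cube)
  moreover have q: "a*a + a + 1 > 0"
  proof -
    have "0 \<le> (a + 1/2) * (a + 1/2)" by simp
    thus ?thesis by (simp add: algebra_simps)
  qed
  ultimately have "(a * (a - 1) * (a - 3) * (a - 1)) * (a*a + a + 1) = 0" by (simp add: mult.assoc)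
  hence "a * (a - 1) * (a - 3) * (a - 1) = 0" using q by simp
  hence "a = 0 \<or> a = 1 \<or> a = 3" by auto
  then show ?thesis by (auto simp: a_def)
qed

end
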